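(* Under the degree-corrected stochastic block model $DCSBM(n,P,\Theta,Z)$ with regularizer $\tau\ge0$, let $\tilde\lambda_1,\dots,\tilde\lambda_K$ be the $K$ nonzero eigenvalues of $\tilde F$ (in descending order of magnitude) and $\tilde a_1,\dots,\tilde a_K$ associated unit-norm right eigenvectors. Then: 1) $\tilde\Gamma\tilde F=N^{\mathscr L_\tau}\tilde\Gamma$; 2) the $K$ nonzero eigenvalues of $N^{\mathscr L_\tau}$ are $\tilde\lambda_1,\dots,\tilde\lambda_K$, with associated unit-norm right eigenvectors $$\tilde\eta_k=\sum_{i=1}^K\big[\tilde a_k(i)/\|\tilde\theta^{(i)}\|\big]\,\tilde\theta^{(i)},\qquad k=1,\dots,K.$$
   Context: $n$ nodes, each in exactly one of $K$ nonempty communities, $g_i$ the community of node $i$; $Z\in\{0,1\}^{n\times K}$ with $Z_{ik}=1$ iff $g_i=k$. $P$ is a $K\times K$ symmetric, nonnegative, nonsingular, irreducible matrix; $\theta\in\mathbb{R}^n$ has positive entries, $\Theta=\mathrm{diag}(\theta)$, $\Omega=\Theta ZPZ'\Theta$. Let $\mathscr D$ be the diagonal matrix with $\mathscr D_{ii}=\sum_{j=1}^n\Omega_{ij}$, $\mathscr D_\tau=\mathscr D+\tau I$, and $\mathscr L_\tau=\mathscr D_\tau^{-1/2}\Omega\mathscr D_\tau^{-1/2}$. For a matrix $Y$ with columns $Y_1,\dots,Y_t$, its column-normalized matrix $N^Y$ has $i$-th column $Y_i/\|Y_i\|$ (Euclidean norm); $N^{\mathscr L_\tau}$ is this for $\mathscr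 L_\tau$. Let $\theta_i^\tau=\theta_i\mathscr D_{ii}/(\mathscr D_{ii}+\tau)$, $\tilde\theta\in\mathbb{R}^n$ with $\tilde\theta_i=\sqrt{\theta_i^\tau}$, and for $1\le k\le K$ let $\tilde\theta^{(k)}(i)=\tilde\theta_i$ if $g_i=k$ and $0$ otherwise. Let $\tilde\Gamma$ be the $n\times K$ matrix with $k$-th column $\tilde\theta^{(k)}/\|\tilde\theta^{(k)}\|$, and $\tilde F=\tilde\Gamma'N^{\mathscr L_\tau}\tilde\Gamma$ ($K\times K$). *)

theory Defs
  imports "HOL-Analysis.Analysis"
begin

text \<open>Matrices are Cartesian: nodes form a finite type 'n (n = CARD('n)),
communities a finite type 'k (K = CARD('k)).\<close>

definition diagm :: "real^'n \<Rightarrow> real^'n^'n" where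
  "diagm v = (\<chi> i j. if i = j then v$i else 0)"

definition matpow :: "real^'k^'k \<Rightarrow> nat \<Rightarrow> real^'k^'k" where
  "matpow A m = (((**) A) ^^ m) (mat 1)"

definition irreducible_mat :: "real^'k^'k \<Rightarrow> bool" where
  "irreducible_mat A \<longleftrightarrow> (\<forall>i j. \<exists>m. 0 < matpow A m $ i $ j)"

definition Zmat :: "('n \<Rightarrow> 'k) \<Rightarrow> real^'k^'n" where
  "Zmat g = (\<chi> i k. if g i = k then 1 else 0)"

definition Omega :: "('n \<Rightarrow> 'k) \<Rightarrow> real^'k^'k \<Rightarrow> real^'n \<Rightarrow> real^'n^'n" where
  "Omega g P \<theta> = diagm \<theta> ** Zmat g ** P ** transpose (Zmat g) ** diagm \<theta>"

definition degv :: "('n \<Rightarrow> 'k) \<Rightarrow> real^'k^'k \<Rightarrow> real^'n \<Rightarrow> real^'n" where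
  "degv g P \<theta> = (\<chi> i. \<Sum>j\<in>UNIV. Omega g P \<theta> $ i $ j)"

definition Ltau :: "('n \<Rightarrow> 'k) \<Rightarrow> real^'k^'k \<Rightarrow> real^'n \<Rightarrow> real \<Rightarrow> real^'n^'n" where
  "Ltau g P \<theta> \<tau> =
     (let Dm = diagm (\<chi> i. 1 / sqrt (degv g P \<theta> $ i + \<tau>))
      in Dm ** Omega g P \<theta> ** Dm)"

definition colnorm :: "real^'m^'n \<Rightarrow> real^'m^'n" where
  "colnorm Y = (\<chi> i j. Y $ i $ j / norm (column j Y))"

definition theta_tilde :: "('n \<Rightarrow> 'k) \<Rightarrow> real^'k^'k \<Rightarrow> real^'n \<Rightarrow> real \<Rightarrow> real^'n" where
  "theta_tilde g P \<theta> \<tau> =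
     (\<chi> i. sqrt (\<theta>$i * degv g P \<theta> $ i / (degv g P \<theta> $ i + \<tau>)))"

definition theta_comm :: "('n \<Rightarrow> 'k) \<Rightarrow> real^'n \<Rightarrow> 'k \<Rightarrow> real^'n" where
  "theta_comm g v k = (\<chi> i. if g i = k then v $ i else 0)"

definition Gamma_tilde :: "('n \<Rightarrow> 'k) \<Rightarrow> real^'k^'k \<Rightarrow> real^'n \<Rightarrow> real \<Rightarrow> real^'k^'n" where
  "Gamma_tilde g P \<theta> \<tau> =
     (\<chi> i k. theta_comm g (theta_tilde g P \<theta> \<tau>) k $ i
              / norm (theta_comm g (theta_tilde g P \<theta> \<tau>) k))"

definition F_tilde :: "('n \<Rightarrow> 'k) \<Rightarrow> real^'k^'k \<Rightarrow> real^'n \<Rightarrow> real \<Rightarrow> real^'k^'k" where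
  "F_tilde g P \<theta> \<tau> =
     transpose (Gamma_tilde g P \<theta> \<tau>) ** colnorm (Ltau g P \<theta> \<tau>) ** Gamma_tilde g P \<theta> \<tau>"

end

theory Submission
  imports Defs
begin

lemma sum_single: "(\<And>x. x \<noteq> a \<Longrightarrow> f x = 0) \<Longrightarrow> (\<Sum>x\<in>(UNIV::'a::finite set). f x) = (f a :: real)"
  by (subst sum.remove[of _ a]) auto

lemma mm_entry: "((A::real^'m^'n) ** (B::real^'p^'m)) $ i $ j = (\<Sum>k\<in>UNIV. A$i$k * B$k$j)"
  by (simp add: matrix_matrix_mult_def)

lemma sum_diff_delta: "(\<Sum>i\<in>(UNIV::'a::finite set). f i * ((if i = b then 1 else 0) - (if i = c then 1 else 0))) = (f b - f c :: real)"
  by (simp add: right_diff_distrib sum_subtractf if_distrib[of "\<lambda>x. f _ * x"] cong: if_cong)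

lemma sum_if_g: "(\<Sum>i\<in>(UNIV::'a::finite set). if g i = k then u i else 0) = (\<Sum>i\<in>{i. g i = k}. u i :: real)"
  by (simp add: sum.inter_filter[symmetric])

lemma mm_diff: "((A::real^'m^'n) - B) ** (C::real^'p^'m) = A ** C - B ** C"
  "C' ** (A - B) = C' ** A - C' ** B"
  by (simp_all add: vec_eq_iff matrix_matrix_mult_def left_diff_distrib right_diff_distrib sum_subtractf)

lemma det_similar:
  fixes N N' S T :: "real^'n::finite^'n"
  assumes "T ** S = mat 1" "N ** S = S ** N'"
  shows "det (mat x - N) = det (mat x - N')"
proof -
  have "det T * det S = 1" using assms(1) by (metis det_I det_mul)
  hence nz: "det S \<noteq> 0" by auto
  have mx: "mat x ** S = S ** mat x"
    by (simp add: vec_eq_iff matrix_matrix_mult_def mat_def if_distrib[of "\<lambda>y. y * _"] if_distrib[of "\<lambda>y. _ * y"] cong: if_cong)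
  have "(mat x - N) ** S = S ** (mat x - N')"
    by (simp add: mm_diff mx assms(2))
  hence "det (mat x - N) * det S = det S * det (mat x - N')" by (metis det_mul)
  with nz show ?thesis by simp
qed

lemma det_block:
  fixes r :: "'k::finite \<Rightarrow> 'n::finite" and h :: "'n \<Rightarrow> 'k" and A :: "real^'n^'n" and B :: "real^'k^'k"
  assumes hr: "\<And>k. h (r k) = k"
  and A: "\<And>i j. A$i$j = (if i \<in> range r \<and> j \<in> range r then B$(h i)$(h j) else if i = j then x else 0)"
  shows "det A = x ^ (CARD('n) - CARD('k)) * det B"
proof -
  define R where "R = range r"
  have injr: "inj r" by (metis hr injI)
  have rh: "y \<in> R \<Longrightarrow> r (h y) = y" for y using hr R_def by auto
  have 1: "det A = (\<Sum>p\<in>{p. p permutes R}. of_int (sign p) * prod (\<lambda>i. A$i$p i) UNIV)"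
    unfolding det_def
  proof (rule sum.mono_neutral_right)
    show "{p. p permutes R} \<subseteq> {p. p permutes UNIV}" by (auto intro: permutes_subset)
    show "\<forall>p\<in>{p. p permutes UNIV} - {p. p permutes R}. of_int (sign p) * (\<Prod>i\<in>UNIV. A $ i $ p i) = 0"
    proof
      fix p assume p: "p \<in> {p. p permutes UNIV} - {p. p permutes R}"
      then obtain i where i: "i \<notin> R" "p i \<noteq> i"
        using permutes_superset[of p UNIV R] by auto
      have "A $ i $ p i = 0" using i A[of i "p i"] R_def by auto
      then show "of_int (sign p) * (\<Prod>i\<in>UNIV. A $ i $ p i) = 0"
        by (simp add: prod_zero_iff) blast
    qed
  qed simp
  have card: "card (UNIV - R) = CARD('n) - CARD('k)"
    using card_image[OF injr] R_def by (simp add: card_Diff_subset)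
  have 2: "prod (\<lambda>i. A$i$p i) UNIV = x^(CARD('n) - CARD('k)) * prod (\<lambda>k. B$k$(h (p (r k)))) UNIV"
    if p: "p permutes R" for p
  proof -
    have "prod (\<lambda>i. A$i$p i) UNIV = prod (\<lambda>i. A$i$p i) R * prod (\<lambda>i. A$i$p i) (UNIV - R)"
      by (metis Diff_partition finite prod.union_disjoint Diff_disjoint subset_UNIV mult.commute inf_commute)
    also have "prod (\<lambda>i. A$i$p i) (UNIV - R) = prod (\<lambda>i. x) (UNIV - R)"
      by (rule prod.cong) (use p permutes_not_in[OF p] A R_def in auto)
    also have "\<dots> = x^(CARD('n) - CARD('k))" using card by simp
    also have "prod (\<lambda>i. A$i$p i) R = prod (\<lambda>i. B$(h i)$(h (p i))) R"
      by (rule prod.cong) (use permutes_in_image[OF p] A R_def in auto)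
    also have "\<dots> = prod (\<lambda>k. B$k$(h (p (r k)))) UNIV"
      unfolding R_def by (subst prod.reindex[OF injr]) (simp add: hr)
    finally show ?thesis by simp
  qed
  have 3: "(\<Sum>p\<in>{p. p permutes R}. of_int (sign p) * prod (\<lambda>k. B$k$(h (p (r k)))) UNIV)
     = det B"
    unfolding det_def
  proof (rule sum.reindex_bij_witness[symmetric, where j = "\<lambda>q y. if y \<in> R then r (q (h y)) else y"
        and i = "\<lambda>p k. h (p (r k))"])
    fix q :: "'k \<Rightarrow> 'k" assume q: "q \<in> {p. p permutes UNIV}"
    interpret pb: permutes_bij_finite q UNIV R r h "\<lambda>y. if y \<in> R then r (q (h y)) else y"
      by unfold_locales (use q injr hr R_def in \<open>auto simp: bij_betw_def\<close>)
    show "(\<lambda>k. h (if r k \<in> R then r (q (h (r k))) else r k)) = q"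
      using hr R_def by auto
    show "(\<lambda>y. if y \<in> R then r (q (h y)) else y) \<in> {p. p permutes R}"
      using pb.permutes_p' by simp
    show "of_int (sign (\<lambda>y. if y \<in> R then r (q (h y)) else y)) *
         (\<Prod>k\<in>UNIV. B $ k $ h (if r k \<in> R then r (q (h (r k))) else r k)) =
         of_int (sign q) * (\<Prod>i\<in>UNIV. B $ i $ q i)"
      using pb.sign_p' hr R_def by auto
  next
    fix p assume p: "p \<in> {p. p permutes R}"
    then have p: "p permutes R" by simp
    interpret pb: permutes_bij_finite p R UNIV h r "\<lambda>x. if x \<in> UNIV then h (p (r x)) else x"
      by unfold_locales (use p rh hr R_def in \<open>auto simp: bij_betw_def inj_on_def image_def\<close>)
    show "(\<lambda>k. h (p (r k))) \<in> {p. p permutes UNIV}"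
      using pb.permutes_p' by simp
    show "(\<lambda>y. if y \<in> R then r (h (p (r (h y)))) else y) = p"
    proof
      fix y show "(if y \<in> R then r (h (p (r (h y)))) else y) = p y"
        using rh permutes_in_image[OF p] permutes_not_in[OF p] by auto
    qed
  qed
  show ?thesis
    unfolding 1 by (simp add: 2 3[symmetric] sum_distrib_left mult.left_commute)
qed

lemma Omega_entry: "Omega g P \<theta> $ i $ j = \<theta>$i * P$(g i)$(g j) * \<theta>$j"
proof -
  have 1: "(diagm \<theta> ** Zmat g) $ i $ k = (if g i = k then \<theta>$i else 0)" for i k
    unfolding mm_entry by (subst sum_single[where a=i]) (auto simp: diagm_def Zmat_def)
  have 2: "(diagm \<theta> ** Zmat g ** P) $ i $ l = \<theta>$i * P $ (g i) $ l" for i l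
    unfolding mm_entry[of "diagm \<theta> ** Zmat g"] by (subst sum_single[where a="g i"]) (auto simp: 1)
  have 3: "(diagm \<theta> ** Zmat g ** P ** transpose (Zmat g)) $ i $ j = \<theta>$i * P $ (g i) $ (g j)" for i j
    unfolding mm_entry[of "diagm \<theta> ** Zmat g ** P"] by (subst sum_single[where a="g j"]) (simp_all add: 2, auto simp: transpose_def Zmat_def)
  show ?thesis unfolding Omega_def
    unfolding mm_entry[of "diagm \<theta> ** Zmat g ** P ** transpose (Zmat g)"] by (subst sum_single[where a=j]) (simp_all add: 3, auto simp: diagm_def)
qed

lemma charpoly_struct:
  fixes g :: "'n::finite \<Rightarrow> 'k::finite" and \<gamma> :: "'n \<Rightarrow> real" and W :: "'k \<Rightarrow> 'k \<Rightarrow> real"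
    and N :: "real^'n^'n" and F :: "real^'k^'k" and G :: "real^'k^'n"
  assumes sg: "surj g" and gpos: "\<And>i. \<gamma> i > 0"
    and N: "\<And>i j. N$i$j = \<gamma> i * W (g i) (g j)"
    and G: "G = (\<chi> i k. if g i = k then \<gamma> i else 0)"
    and NG: "N ** G = G ** F"
  shows "det (mat x - N) = x^(CARD('n) - CARD('k)) * det (mat x - F)"
proof -
  define rep where "rep k = (SOME i. g i = k)" for k
  have grep[simp]: "g (rep k) = k" for k unfolding rep_def by (rule someI_ex) (use sg in \<open>metis surjD\<close>)
  define R where "R = range rep"
  have inR: "i \<in> R \<longleftrightarrow> rep (g i) = i" for i unfolding R_def
  proof
    assume "i \<in> range rep" then obtain k where "i = rep k" by blast
    then show "rep (g i) = i" by simp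
  qed (metis rangeI)
  define \<sigma> where "\<sigma> k = (\<Sum>i\<in>{i. g i = k}. \<gamma> i)" for k
  have spos: "\<sigma> k > 0" for k unfolding \<sigma>_def
  proof (rule sum_pos)
    show "{i. g i = k} \<noteq> {}" using grep[of k] by blast
  qed (auto intro: gpos)
  define S :: "real^'n^'n" where "S = (\<chi> i j. if j \<in> R then G$i$(g j)
        else (if i = j then 1 else 0) - (if i = rep (g j) then 1 else 0))"
  define T :: "real^'n^'n" where "T = (\<chi> a i. if a \<in> R then (if g i = g a then 1 / \<sigma> (g a) else 0)
        else (if i = a then 1 else 0) - (if g i = g a then \<gamma> a / \<sigma> (g a) else 0))"
  define N' :: "real^'n^'n" where "N' = (\<chi> i j. if i \<in> R \<and> j \<in> R then F$(g i)$(g j) else 0)"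
  have TS: "T ** S = mat 1"
  proof -
    have "(T ** S) $ a $ b = (if a = b then 1 else 0)" for a b
    proof (cases "b \<in> R")
      case bR: True
      have Sb: "S $ i $ b = (if g i = g b then \<gamma> i else 0)" for i using bR by (simp add: S_def G)
      show ?thesis
      proof (cases "a \<in> R")
        case True
        have "(T ** S) $ a $ b = (\<Sum>i\<in>UNIV. if g i = g a then (if g a = g b then \<gamma> i / \<sigma> (g a) else 0) else 0)"
          unfolding mm_entry Sb using True by (intro sum.cong) (auto simp: T_def)
        also have "\<dots> = (if g a = g b then 1 else 0)"
          unfolding sum_if_g using spos[of "g a"]
          by (auto simp: \<sigma>_def sum_divide_distrib[symmetric])
        also have "\<dots> = (if a = b then 1 else 0)" using True bR inR by metis
        finally show ?thesis .
      next
        case False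
        have Ta: "T$a$i = (if i = a then 1 else 0) - (if g i = g a then \<gamma> a / \<sigma> (g a) else 0)" for i
          using False by (simp add: T_def)
        have "(T ** S) $ a $ b = (\<Sum>i\<in>UNIV. (if i = a then S$i$b else 0))
            - (\<Sum>i\<in>UNIV. (if g i = g a then \<gamma> a / \<sigma> (g a) * S$i$b else 0))"
          unfolding mm_entry Ta sum_subtractf[symmetric] by (intro sum.cong) (auto simp: algebra_simps)
        also have "(\<Sum>i\<in>UNIV. (if i = a then S$i$b else 0)) = S$a$b"
          by (subst sum_single[where a=a]) auto
        also have "(\<Sum>i\<in>UNIV. (if g i = g a then \<gamma> a / \<sigma> (g a) * S$i$b else 0))
             = \<gamma> a / \<sigma> (g a) * (\<Sum>i\<in>{i. g i = g a}. S$i$b)"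
          unfolding sum_if_g sum_distrib_left ..
        also have "(\<Sum>i\<in>{i. g i = g a}. S$i$b) = (if g a = g b then \<sigma> (g a) else 0)"
          unfolding Sb \<sigma>_def by (auto intro: sum.neutral)
        also have "S$a$b - \<gamma> a / \<sigma> (g a) * (if g a = g b then \<sigma> (g a) else 0) = 0"
          using spos[of "g a"] by (cases "g a = g b") (simp_all add: Sb)
        finally show ?thesis using False bR by auto
      qed
    next
      case bR: False
      have Sb': "S$l$b = (if l = b then 1 else 0) - (if l = rep (g b) then 1 else 0)" for l
        using bR by (simp add: S_def)
      have "(T ** S) $ a $ b = T $ a $ b - T $ a $ rep (g b)"
        unfolding mm_entry Sb' by (rule sum_diff_delta)
      also have "\<dots> = (if a = b then 1 else 0)"
        using bR inR[of a] by (auto simp: T_def)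
      finally show ?thesis .
    qed
    then show ?thesis by (simp add: vec_eq_iff mat_def)
  qed
  have NS: "N ** S = S ** N'"
  proof -
    have "(N ** S) $ i $ j = (S ** N') $ i $ j" for i j
    proof (cases "j \<in> R")
      case True
      have "(N ** S) $ i $ j = (N ** G) $ i $ g j"
        unfolding mm_entry using True by (simp add: S_def)
      also have "\<dots> = (\<Sum>k\<in>UNIV. G$i$k * F$k$(g j))" by (simp add: NG mm_entry)
      also have "\<dots> = (\<Sum>l\<in>R. G$i$(g l) * F$(g l)$(g j))"
        unfolding R_def by (subst sum.reindex) (auto intro: inj_on_inverseI[of _ g])
      also have "\<dots> = (S ** N') $ i $ j"
        unfolding mm_entry using True
        by (simp add: N'_def S_def if_distrib[of "\<lambda>x. _ * x"] sum.inter_filter[symmetric] cong: if_cong)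
      finally show ?thesis .
    next
      case False
      have Sj: "S$l$j = (if l = j then 1 else 0) - (if l = rep (g j) then 1 else 0)" for l
        using False by (simp add: S_def)
      have "(N ** S) $ i $ j = N $ i $ j - N $ i $ rep (g j)"
        unfolding mm_entry Sj by (rule sum_diff_delta)
      also have "\<dots> = 0" by (simp add: N)
      also have "\<dots> = (S ** N') $ i $ j"
        unfolding mm_entry using False by (simp add: N'_def)
      finally show ?thesis .
    qed
    then show ?thesis by (simp add: vec_eq_iff)
  qed
  have "det (mat x - N) = det (mat x - N')" by (rule det_similar[OF TS NS])
  also have "\<dots> = x^(CARD('n) - CARD('k)) * det (mat x - F)"
  proof (rule det_block[where r = rep and h = g])
    fix i j
    show "(mat x - N') $ i $ j = (if i \<in> range rep \<and> j \<in> range rep then (mat x - F) $ g i $ g j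
        else if i = j then x else 0)"
      unfolding R_def[symmetric] using inR[of i] inR[of j]
      by (auto simp: N'_def mat_def)
  qed simp
  finally show ?thesis .
qed

lemma vnorm: "norm (x::real^'n) = sqrt (\<Sum>i\<in>UNIV. (x$i)^2)"
  by (simp add: norm_vec_def L2_set_def)

lemma claim1_struct:
  fixes g :: "'n::finite \<Rightarrow> 'k::finite" and \<gamma> :: "'n \<Rightarrow> real" and W :: "'k \<Rightarrow> 'k \<Rightarrow> real"
    and N :: "real^'n^'n" and G :: "real^'k^'n"
  assumes N: "\<And>i j. N$i$j = \<gamma> i * W (g i) (g j)"
    and G: "G = (\<chi> i k. if g i = k then \<gamma> i else 0)"
    and unit: "\<And>k. (\<Sum>i\<in>{i. g i = k}. (\<gamma> i)^2) = 1"
  shows "G ** (transpose G ** N ** G) = N ** G"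
proof -
  define \<sigma> where "\<sigma> l = (\<Sum>i\<in>{i. g i = l}. \<gamma> i)" for l
  have Ge: "G$i$k = (if g i = k then \<gamma> i else 0)" for i k by (simp add: G)
  have NG: "(N ** G) $ i $ l = \<gamma> i * W (g i) l * \<sigma> l" for i l
  proof -
    have "(N ** G) $ i $ l = (\<Sum>j\<in>UNIV. if g j = l then \<gamma> i * W (g i) l * \<gamma> j else 0)"
      unfolding mm_entry by (intro sum.cong) (auto simp: N Ge)
    also have "\<dots> = \<gamma> i * W (g i) l * \<sigma> l"
      unfolding sum_if_g \<sigma>_def sum_distrib_left ..
    finally show ?thesis .
  qed
  have GN: "(transpose G ** N) $ k $ j = W k (g j)" for k j
  proof -
    have "(transpose G ** N) $ k $ j = (\<Sum>i\<in>UNIV. if g i = k then (\<gamma> i)^2 * W k (g j) else 0)"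
      unfolding mm_entry by (intro sum.cong) (auto simp: N Ge transpose_def power2_eq_square)
    also have "\<dots> = W k (g j)"
      unfolding sum_if_g sum_distrib_right[symmetric] unit by simp
    finally show ?thesis .
  qed
  have GNG: "(transpose G ** N ** G) $ k $ l = W k l * \<sigma> l" for k l
  proof -
    have "(transpose G ** N ** G) $ k $ l = (\<Sum>j\<in>UNIV. if g j = l then W k l * \<gamma> j else 0)"
      unfolding mm_entry[of "transpose G ** N"] by (intro sum.cong) (auto simp: GN Ge)
    also have "\<dots> = W k l * \<sigma> l"
      unfolding sum_if_g \<sigma>_def sum_distrib_left ..
    finally show ?thesis .
  qed
  have "(G ** (transpose G ** N ** G)) $ i $ l = (N ** G) $ i $ l" for i l
  proof -
    have "(G ** (transpose G ** N ** G)) $ i $ l = (\<Sum>k\<in>UNIV. if k = g i then \<gamma> i * (W k l * \<sigma> l) else 0)"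
      unfolding mm_entry[of G] by (intro sum.cong) (auto simp: GNG Ge)
    also have "\<dots> = (N ** G) $ i $ l"
      by (subst sum_single[where a="g i"]) (auto simp: NG)
    finally show ?thesis .
  qed
  then show ?thesis by (simp add: vec_eq_iff)
qed

lemma norm_struct:
  fixes g :: "'n::finite \<Rightarrow> 'k::finite" and \<gamma> :: "'n \<Rightarrow> real" and G :: "real^'k^'n"
  assumes G: "G = (\<chi> i k. if g i = k then \<gamma> i else 0)"
    and unit: "\<And>k. (\<Sum>i\<in>{i. g i = k}. (\<gamma> i)^2) = 1"
  shows "norm (G *v a) = norm a"
proof -
  have Ga: "(G *v a) $ i = \<gamma> i * a $ g i" for i
    unfolding matrix_vector_mult_def G by (simp, subst sum_single[where a="g i"]) auto
  have "(\<Sum>i\<in>UNIV. ((G *v a) $ i)^2) = (\<Sum>k\<in>UNIV. \<Sum>i\<in>{i. i \<in> UNIV \<and> g i = k}. (\<gamma> i * a $ g i)^2)"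
    unfolding Ga by (rule sum.group[symmetric]) auto
  also have "\<dots> = (\<Sum>k\<in>UNIV. (a $ k)^2 * (\<Sum>i\<in>{i. g i = k}. (\<gamma> i)^2))"
    by (intro sum.cong refl) (auto simp: sum_distrib_left power_mult_distrib mult.commute)
  also have "\<dots> = (\<Sum>k\<in>UNIV. (a $ k)^2)" by (simp add: unit)
  finally show ?thesis by (simp add: vnorm)
qed

theorem lemma5:
  fixes g :: "'n::finite \<Rightarrow> 'k::finite"
    and P :: "real^'k^'k" and \<theta> :: "real^'n" and \<tau> :: real
    and lam :: "nat \<Rightarrow> real" and a :: "nat \<Rightarrow> real^'k"
  assumes comm_nonempty: "surj g"
    and P_sym: "transpose P = P"
    and P_nonneg: "\<forall>i j. 0 \<le> P $ i $ j"
    and P_nonsing: "invertible P"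
    and P_irred: "irreducible_mat P"
    and theta_pos: "\<forall>i. 0 < \<theta> $ i"
    and tau_nonneg: "0 \<le> \<tau>"
    and F_eigs: "\<forall>x. det (mat x - F_tilde g P \<theta> \<tau>) = (\<Prod>k<CARD('k). (x - lam k))"
    and lam_nonzero: "\<forall>k<CARD('k). lam k \<noteq> 0"
    and lam_order: "\<forall>i j. i \<le> j \<and> j < CARD('k) \<longrightarrow> \<bar>lam j\<bar> \<le> \<bar>lam i\<bar>"
    and a_eig: "\<forall>k<CARD('k). F_tilde g P \<theta> \<tau> *v a k = lam k *s a k \<and> norm (a k) = 1"
  shows "Gamma_tilde g P \<theta> \<tau> ** F_tilde g P \<theta> \<tau>
           = colnorm (Ltau g P \<theta> \<tau>) ** Gamma_tilde g P \<theta> \<tau>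
         \<and> (\<forall>x. det (mat x - colnorm (Ltau g P \<theta> \<tau>))
                 = x ^ (CARD('n) - CARD('k)) * (\<Prod>k<CARD('k). (x - lam k)))
         \<and> (\<forall>k<CARD('k).
              (let \<eta> = (\<Sum>i\<in>UNIV. (a k $ i / norm (theta_comm g (theta_tilde g P \<theta> \<tau>) i))
                                    *s theta_comm g (theta_tilde g P \<theta> \<tau>) i)
               in colnorm (Ltau g P \<theta> \<tau>) *v \<eta> = lam k *s \<eta> \<and> norm \<eta> = 1))"
proof -
  define dd where "dd k = (\<Sum>j\<in>UNIV. P$k$(g j) * \<theta>$j)" for k
  define D where "D = degv g P \<theta>"
  obtain Q where Q: "P ** Q = mat 1" "Q ** P = mat 1" using P_nonsing unfolding invertible_def by blast
  have rownz: "\<exists>l. P$k$l \<noteq> 0" for k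
  proof (rule ccontr)
    assume "\<not> ?thesis"
    then have "(P ** Q)$k$k = 0" unfolding mm_entry by simp
    then show False using Q(1) by (simp add: mat_def)
  qed
  have colnz: "\<exists>k. P$k$l \<noteq> 0" for l
  proof (rule ccontr)
    assume "\<not> ?thesis"
    then have "(Q ** P)$l$l = 0" unfolding mm_entry by simp
    then show False using Q(2) by (simp add: mat_def)
  qed
  have dd_pos: "dd k > 0" for k
  proof -
    obtain l where l: "P$k$l \<noteq> 0" using rownz by blast
    obtain j where j: "g j = l" using comm_nonempty by (metis surjD)
    have "P$k$(g j) * \<theta>$j > 0" using l j P_nonneg theta_pos
      by (metis less_eq_real_def mult_pos_pos)
    then show ?thesis unfolding dd_def
      by (intro sum_pos2[where i=j]) (auto intro!: mult_nonneg_nonneg simp: P_nonneg less_imp_le theta_pos)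
  qed
  have Di: "D$i = \<theta>$i * dd (g i)" for i
    unfolding D_def degv_def dd_def by (simp add: Omega_entry sum_distrib_left mult.assoc)
  have Dpos: "D$i > 0" for i using Di dd_pos theta_pos by simp
  have Dt: "D$i + \<tau> > 0" for i using Dpos tau_nonneg by (simp add: add_pos_nonneg)
  define \<phi> where "\<phi> i = \<theta>$i / sqrt (D$i + \<tau>)" for i
  have phi_pos: "\<phi> i > 0" for i unfolding \<phi>_def using theta_pos Dt by simp
  have Lij: "Ltau g P \<theta> \<tau> $ i $ j = \<phi> i * P$(g i)$(g j) * \<phi> j" for i j
  proof -
    define Dm :: "real^'n^'n" where "Dm = diagm (\<chi> i. 1 / sqrt (degv g P \<theta> $ i + \<tau>))"
    have "Ltau g P \<theta> \<tau> = Dm ** Omega g P \<theta> ** Dm" unfolding Ltau_def Dm_def Let_def ..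
    moreover have "(Dm ** Omega g P \<theta>) $ i $ l = 1 / sqrt (D$i + \<tau>) * Omega g P \<theta> $ i $ l" for l
      unfolding mm_entry by (subst sum_single[where a=i]) (auto simp: Dm_def diagm_def D_def)
    moreover have "(Dm ** Omega g P \<theta> ** Dm) $ i $ j = (Dm ** Omega g P \<theta>) $ i $ j * (1 / sqrt (D$j + \<tau>))"
      unfolding mm_entry[of "Dm ** Omega g P \<theta>"] by (subst sum_single[where a=j]) (auto simp: Dm_def diagm_def D_def)
    ultimately show ?thesis by (simp add: Omega_entry \<phi>_def)
  qed
  define c where "c l = sqrt (\<Sum>i\<in>UNIV. (\<phi> i * P$(g i)$l)^2)" for l
  have c_pos: "c l > 0" for l
  proof -
    obtain k where k: "P$k$l \<noteq> 0" using colnz by blast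
    obtain i where i: "g i = k" using comm_nonempty by (metis surjD)
    have "(\<phi> i * P$(g i)$l)^2 > 0" using k i phi_pos[of i] by simp
    then have "(\<Sum>i\<in>UNIV. (\<phi> i * P$(g i)$l)^2) > 0"
      by (intro sum_pos2[where i=i]) auto
    then show ?thesis unfolding c_def by simp
  qed
  have colL: "norm (column j (Ltau g P \<theta> \<tau>)) = \<phi> j * c (g j)" for j
  proof -
    have "norm (column j (Ltau g P \<theta> \<tau>)) = sqrt (\<Sum>i\<in>UNIV. (\<phi> j)^2 * (\<phi> i * P$(g i)$(g j))^2)"
      unfolding vnorm column_def Lij by (simp add: power_mult_distrib mult_ac)
    also have "\<dots> = \<phi> j * c (g j)"
      unfolding c_def sum_distrib_left[symmetric] real_sqrt_mult using phi_pos[of j] by simp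
    finally show ?thesis .
  qed
  define N where "N = colnorm (Ltau g P \<theta> \<tau>)"
  have Nij: "N $ i $ j = \<phi> i * P$(g i)$(g j) / c (g j)" for i j
    unfolding N_def colnorm_def using phi_pos[of j] by (simp add: Lij colL)
  define tt where "tt = theta_tilde g P \<theta> \<tau>"
  have tti: "tt$i = \<phi> i * sqrt (dd (g i))" for i
  proof -
    have "\<theta>$i * D$i / (D$i + \<tau>) = (\<phi> i)^2 * dd (g i)"
      unfolding \<phi>_def power_divide real_sqrt_pow2[OF less_imp_le[OF Dt]]
      by (simp add: Di power2_eq_square)
    then show ?thesis unfolding tt_def theta_tilde_def D_def[symmetric]
      using phi_pos[of i] by (simp add: real_sqrt_mult)
  qed
  have tt_pos: "tt$i > 0" for i using tti phi_pos dd_pos by simp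
  define \<nu> where "\<nu> k = norm (theta_comm g tt k)" for k
  have nu2: "(\<nu> k)^2 = (\<Sum>i\<in>{i. g i = k}. (tt$i)^2)" for k
    unfolding \<nu>_def vnorm theta_comm_def
    by (simp add: sum_if_g[symmetric] if_distrib[of "\<lambda>x. x^2"] cong: if_cong) (intro sum_nonneg, simp)
  have nu_pos: "\<nu> k > 0" for k
  proof -
    obtain i where i: "g i = k" using comm_nonempty by (metis surjD)
    have "(\<Sum>i\<in>{i. g i = k}. (tt$i)^2) > 0"
      using i tt_pos[of i] by (intro sum_pos2[where i=i]) auto
    then have "(\<nu> k)^2 > 0" using nu2 by simp
    then show ?thesis unfolding \<nu>_def by simp
  qed
  define \<gamma> where "\<gamma> i = tt$i / \<nu> (g i)" for i
  have gam_pos: "\<gamma> i > 0" for i unfolding \<gamma>_def using tt_pos nu_pos by simp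
  define G where "G = Gamma_tilde g P \<theta> \<tau>"
  have G: "G = (\<chi> i k. if g i = k then \<gamma> i else 0)"
    unfolding G_def Gamma_tilde_def tt_def[symmetric] \<nu>_def[symmetric] \<gamma>_def
    by (simp add: vec_eq_iff theta_comm_def)
  have unit: "(\<Sum>i\<in>{i. g i = k}. (\<gamma> i)^2) = 1" for k
  proof -
    have "(\<Sum>i\<in>{i. g i = k}. (\<gamma> i)^2) = (\<Sum>i\<in>{i. g i = k}. (tt$i)^2) / (\<nu> k)^2"
      unfolding \<gamma>_def by (simp add: power_divide sum_divide_distrib)
    then show ?thesis using nu2[of k] nu_pos[of k] by (metis divide_self power_not_zero less_irrefl)
  qed
  define W where "W k l = \<nu> k * P$k$l / (sqrt (dd k) * c l)" for k l
  have NW: "N$i$j = \<gamma> i * W (g i) (g j)" for i j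
    unfolding Nij W_def \<gamma>_def tti using nu_pos[of "g i"] dd_pos[of "g i"] by simp
  define F where "F = F_tilde g P \<theta> \<tau>"
  have Fdef: "F = transpose G ** N ** G" unfolding F_def F_tilde_def G_def N_def ..
  have C1: "G ** F = N ** G" unfolding Fdef by (rule claim1_struct[OF NW G unit])
  have C2: "det (mat x - N) = x ^ (CARD('n) - CARD('k)) * (\<Prod>k<CARD('k). (x - lam k))" for x
    using charpoly_struct[OF comm_nonempty gam_pos NW G C1[symmetric], of x] F_eigs
    unfolding F_def by simp
  have C3: "(let \<eta> = (\<Sum>i\<in>UNIV. (a k $ i / norm (theta_comm g (theta_tilde g P \<theta> \<tau>) i))
                                    *s theta_comm g (theta_tilde g P \<theta> \<tau>) i)
               in N *v \<eta> = lam k *s \<eta> \<and> norm \<eta> = 1)" if k: "k < CARD('k)" for k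
  proof -
    have eta: "(\<Sum>i\<in>UNIV. (a k $ i / norm (theta_comm g (theta_tilde g P \<theta> \<tau>) i))
                  *s theta_comm g (theta_tilde g P \<theta> \<tau>) i) = G *v a k"
    proof -
      have "(\<Sum>i\<in>UNIV. (a k $ i / \<nu> i) *s theta_comm g tt i) $ m = (G *v a k) $ m" for m
      proof -
        have "(\<Sum>i\<in>UNIV. (a k $ i / \<nu> i) *s theta_comm g tt i) $ m
            = (\<Sum>i\<in>UNIV. a k $ i / \<nu> i * theta_comm g tt i $ m)"
          by (simp add: sum_component)
        also have "\<dots> = a k $ g m / \<nu> (g m) * tt $ m"
          by (subst sum_single[where a="g m"]) (auto simp: theta_comm_def)
        finally have L: "(\<Sum>i\<in>UNIV. (a k $ i / \<nu> i) *s theta_comm g tt i) $ m = a k $ g m / \<nu> (g m) * tt $ m" .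
        have "(G *v a k) $ m = (\<Sum>i\<in>UNIV. G $ m $ i * a k $ i)"
          by (simp add: matrix_vector_mult_def)
        also have "\<dots> = \<gamma> m * a k $ g m"
          by (subst sum_single[where a="g m"]) (auto simp: G)
        finally have R: "(G *v a k) $ m = \<gamma> m * a k $ g m" .
        show ?thesis unfolding L R by (simp add: \<gamma>_def)
      qed
      then show ?thesis unfolding tt_def[symmetric] \<nu>_def[symmetric] by (simp add: vec_eq_iff)
    qed
    have ev: "F *v a k = lam k *s a k" and na: "norm (a k) = 1" using a_eig k unfolding F_def by auto
    have "N *v (G *v a k) = (N ** G) *v a k" by (rule matrix_vector_mul_assoc)
    also have "\<dots> = (G ** F) *v a k" by (simp add: C1)
    also have "\<dots> = G *v (F *v a k)" by (rule matrix_vector_mul_assoc[symmetric])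
    also have "\<dots> = lam k *s (G *v a k)" by (simp add: ev vector_scalar_commute)
    finally have "N *v (G *v a k) = lam k *s (G *v a k)" .
    moreover have "norm (G *v a k) = 1" using norm_struct[OF G unit] na by simp
    ultimately show ?thesis unfolding eta Let_def by simp
  qed
  show ?thesis
    using C1 C2 C3 unfolding F_def G_def N_def by simp
qed

end
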